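(* Let $X=\{i,j,k\}$ and let $\langle Q,\nu\rangle$ be an MSC on $X$ in which every off-diagonal transition probability $q_{ab}(M)$ ($M\subseteq X$ a menu, $a\ne b\in M$) is strictly positive except $q_{ik}(\{i,k\})=q_{ik}(X)=0$. Write $\rho(M)=\rho(\nu_M,Q(M))$. Then (a) $\dfrac{\rho_i(X)}{\rho_j(X)}>\dfrac{\rho_i(\{i,j\})}{\rho_j(\{i,j\})}$; (b) $\rho_i(X)>\rho_i(\{i,j\})$ if and only if $q_{ki}(X)>q_{ji}(X)$.
   Context: A menu is a nonempty subset of $X$. An MSC (Markov stochastic choice model) $\langle Q,\nu\rangle$ consists of, for every menu $M$, a matrix $Q(M)=(q_{ab}(M))_{a,b\in M}$ with nonnegative entries and a probability distribution $\nu_M$ on $M$, such that for all menus $M$ and distinct $a,b\in M$: (A1) $q_{aa}(M)=1-\sum_{c\neq a}q_{ac}(M)>0$; (A2) if $q_{ab}(\{a,b\})=0$ then $q_{ba}(\{a,b\})>0$; (A3) $q_{ab}(\{a,b\})\,q_{ba}(M)=q_{ba}(\{a,b\})\,q_{ab}(M)$. For a right stochastic matrix $Q$ on $M$ and a distribution $\nu$ on $M$ define $\rho(\nu,Q)=\lim_{\alpha\to0^+}\sum_{t\ge0}\alpha(1-\alpha)^t\nu Q^t$ (the limit exists and satisfies $\rho(\nu,Q)(I-Q)=0$; for irreducible $Q$ it is the unique stationary distribution). *)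

theory Defs
  imports "HOL-Analysis.Analysis"
begin

definition menu :: "'a set \<Rightarrow> 'a set \<Rightarrow> bool" where
  "menu X M \<longleftrightarrow> M \<subseteq> X \<and> M \<noteq> {}"

text \<open>Matrices on a menu M are functions 'a => 'a => real, only entries indexed
  by elements of M matter. t-th matrix power on M.\<close>
fun matpow :: "'a set \<Rightarrow> ('a \<Rightarrow> 'a \<Rightarrow> real) \<Rightarrow> nat \<Rightarrow> 'a \<Rightarrow> 'a \<Rightarrow> real" where
  "matpow M Q 0 a b = (if a = b then 1 else 0)"
| "matpow M Q (Suc t) a b = (\<Sum>c\<in>M. matpow M Q t a c * Q c b)"

definition vecmatpow :: "'a set \<Rightarrow> ('a \<Rightarrow> real) \<Rightarrow> ('a \<Rightarrow> 'a \<Rightarrow> real) \<Rightarrow> nat \<Rightarrow> 'a \<Rightarrow> real" where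
  "vecmatpow M \<nu> Q t b = (\<Sum>a\<in>M. \<nu> a * matpow M Q t a b)"

definition rho :: "'a set \<Rightarrow> ('a \<Rightarrow> real) \<Rightarrow> ('a \<Rightarrow> 'a \<Rightarrow> real) \<Rightarrow> 'a \<Rightarrow> real" where
  "rho M \<nu> Q b = Lim (at_right 0)
     (\<lambda>\<alpha>::real. \<Sum>t. \<alpha> * (1 - \<alpha>) ^ t * vecmatpow M \<nu> Q t b)"

definition MSC :: "'a set \<Rightarrow> ('a set \<Rightarrow> 'a \<Rightarrow> 'a \<Rightarrow> real) \<Rightarrow> ('a set \<Rightarrow> 'a \<Rightarrow> real) \<Rightarrow> bool" where
  "MSC X Q \<nu> \<longleftrightarrow> (\<forall>M. menu X M \<longrightarrow>
      (\<forall>a\<in>M. \<forall>b\<in>M. Q M a b \<ge> 0) \<and>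
      (\<forall>a\<in>M. \<nu> M a \<ge> 0) \<and> (\<Sum>a\<in>M. \<nu> M a) = 1 \<and>
      (\<forall>a\<in>M. Q M a a = 1 - (\<Sum>c\<in>M - {a}. Q M a c) \<and> Q M a a > 0) \<and>
      (\<forall>a\<in>M. \<forall>b\<in>M. a \<noteq> b \<longrightarrow>
          (Q {a,b} a b = 0 \<longrightarrow> Q {a,b} b a > 0) \<and>
          Q {a,b} a b * Q M b a = Q {a,b} b a * Q M a b))"

end

theory Submission imports Defs begin

lemma matpow_props:
  assumes fin: "finite M" and Qnn: "\<forall>a\<in>M. \<forall>b\<in>M. Q a b \<ge> 0"
    and Qrow: "\<forall>a\<in>M. (\<Sum>b\<in>M. Q a b) = 1" and a: "a \<in> M"
  shows "(\<forall>b\<in>M. matpow M Q t a b \<ge> 0) \<and> (\<Sum>b\<in>M. matpow M Q t a b) = 1"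
proof (induction t)
  case 0
  then show ?case using fin a by (simp add: sum.delta)
next
  case (Suc t)
  have nn: "\<forall>b\<in>M. matpow M Q (Suc t) a b \<ge> 0"
    using Suc Qnn by (auto intro!: sum_nonneg mult_nonneg_nonneg)
  have "(\<Sum>b\<in>M. matpow M Q (Suc t) a b) = (\<Sum>b\<in>M. \<Sum>c\<in>M. matpow M Q t a c * Q c b)" by simp
  also have "\<dots> = (\<Sum>c\<in>M. \<Sum>b\<in>M. matpow M Q t a c * Q c b)" by (rule sum.swap)
  also have "\<dots> = (\<Sum>c\<in>M. matpow M Q t a c * (\<Sum>b\<in>M. Q c b))" by (simp add: sum_distrib_left)
  also have "\<dots> = 1" using Qrow Suc by simp
  finally show ?case using nn by simp
qed

lemma vec_props:
  assumes fin: "finite M" and Qnn: "\<forall>a\<in>M. \<forall>b\<in>M. Q a b \<ge> 0"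
    and Qrow: "\<forall>a\<in>M. (\<Sum>b\<in>M. Q a b) = 1"
    and \<nu>nn: "\<forall>a\<in>M. \<nu> a \<ge> 0" and \<nu>sum: "(\<Sum>a\<in>M. \<nu> a) = 1"
  shows "(\<forall>b\<in>M. vecmatpow M \<nu> Q t b \<ge> 0) \<and> (\<Sum>b\<in>M. vecmatpow M \<nu> Q t b) = 1"
proof -
  note mp = matpow_props[OF fin Qnn Qrow]
  have nn: "\<forall>b\<in>M. vecmatpow M \<nu> Q t b \<ge> 0"
    unfolding vecmatpow_def using mp \<nu>nn by (auto intro!: sum_nonneg mult_nonneg_nonneg)
  have "(\<Sum>b\<in>M. vecmatpow M \<nu> Q t b) = (\<Sum>a\<in>M. \<Sum>b\<in>M. \<nu> a * matpow M Q t a b)"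
    unfolding vecmatpow_def by (rule sum.swap)
  also have "\<dots> = (\<Sum>a\<in>M. \<nu> a * (\<Sum>b\<in>M. matpow M Q t a b))" by (simp add: sum_distrib_left)
  also have "\<dots> = 1" using mp \<nu>sum by simp
  finally show ?thesis using nn by simp
qed

lemma vec_rec: "vecmatpow M \<nu> Q (Suc t) b = (\<Sum>c\<in>M. vecmatpow M \<nu> Q t c * Q c b)"
proof -
  have "vecmatpow M \<nu> Q (Suc t) b = (\<Sum>a\<in>M. \<Sum>c\<in>M. \<nu> a * matpow M Q t a c * Q c b)"
    unfolding vecmatpow_def by (simp add: sum_distrib_left mult.assoc)
  also have "\<dots> = (\<Sum>c\<in>M. \<Sum>a\<in>M. \<nu> a * matpow M Q t a c * Q c b)" by (rule sum.swap)
  also have "\<dots> = (\<Sum>c\<in>M. vecmatpow M \<nu> Q t c * Q c b)"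
    unfolding vecmatpow_def by (simp add: sum_distrib_right)
  finally show ?thesis .
qed

lemma vec0: "finite M \<Longrightarrow> b \<in> M \<Longrightarrow> vecmatpow M \<nu> Q 0 b = \<nu> b"
  unfolding vecmatpow_def by (simp add: sum.delta' if_distrib cong: if_cong)

lemma resolvent:
  assumes fin: "finite M" and Qnn: "\<forall>a\<in>M. \<forall>b\<in>M. Q a b \<ge> 0"
    and Qrow: "\<forall>a\<in>M. (\<Sum>b\<in>M. Q a b) = 1"
    and \<nu>nn: "\<forall>a\<in>M. \<nu> a \<ge> 0" and \<nu>sum: "(\<Sum>a\<in>M. \<nu> a) = 1"
    and al: "0 < \<alpha>" "\<alpha> < (1::real)"
  defines "R \<equiv> \<lambda>b. \<Sum>t. \<alpha> * (1-\<alpha>)^t * vecmatpow M \<nu> Q t b"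
  shows "\<forall>b\<in>M. R b = \<alpha> * \<nu> b + (1-\<alpha>) * (\<Sum>c\<in>M. R c * Q c b)"
    and "\<forall>b\<in>M. R b \<ge> 0" and "(\<Sum>b\<in>M. R b) = 1"
proof -
  note vp = vec_props[OF fin Qnn Qrow \<nu>nn \<nu>sum]
  have vb: "0 \<le> vecmatpow M \<nu> Q t b \<and> vecmatpow M \<nu> Q t b \<le> 1" if "b \<in> M" for t b
    using vp[of t] that member_le_sum[OF that, of "vecmatpow M \<nu> Q t"] fin by auto
  have summ: "summable (\<lambda>t. \<alpha> * (1-\<alpha>)^t * vecmatpow M \<nu> Q t b)" if "b \<in> M" for b
  proof (rule summable_comparison_test'[where N=0])
    show "summable (\<lambda>t. \<alpha> * (1-\<alpha>)^t)"
      by (rule summable_mult, rule summable_geometric) (use al in auto)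
    fix n
    show "norm (\<alpha> * (1-\<alpha>)^n * vecmatpow M \<nu> Q n b) \<le> \<alpha> * (1-\<alpha>)^n"
      using vb[OF that, of n] al by (auto simp: abs_mult intro!: mult_left_le)
  qed
  show nn: "\<forall>b\<in>M. R b \<ge> 0"
    unfolding R_def using vb al by (auto intro!: suminf_nonneg summ)
  show eq: "\<forall>b\<in>M. R b = \<alpha> * \<nu> b + (1-\<alpha>) * (\<Sum>c\<in>M. R c * Q c b)"
  proof
    fix b assume b: "b \<in> M"
    let ?f = "\<lambda>t. \<alpha> * (1-\<alpha>)^t * vecmatpow M \<nu> Q t b"
    have "(\<Sum>n. ?f (Suc n)) = R b - ?f 0"
      unfolding R_def by (rule suminf_split_head[OF summ[OF b]])
    moreover have "?f 0 = \<alpha> * \<nu> b" using vec0[OF fin b] by simp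
    moreover have "(\<Sum>n. ?f (Suc n)) = (1-\<alpha>) * (\<Sum>c\<in>M. R c * Q c b)"
    proof -
      have "(\<Sum>n. ?f (Suc n)) = (\<Sum>n. \<Sum>c\<in>M. ((1-\<alpha>) * Q c b) * (\<alpha> * (1-\<alpha>)^n * vecmatpow M \<nu> Q n c))"
        by (simp add: vec_rec sum_distrib_left mult_ac)
      also have "\<dots> = (\<Sum>c\<in>M. \<Sum>n. ((1-\<alpha>) * Q c b) * (\<alpha> * (1-\<alpha>)^n * vecmatpow M \<nu> Q n c))"
        by (rule suminf_sum) (rule summable_mult, rule summ)
      also have "\<dots> = (\<Sum>c\<in>M. ((1-\<alpha>) * Q c b) * R c)"
        unfolding R_def by (intro sum.cong refl suminf_mult summ)
      finally show ?thesis by (simp add: sum_distrib_left mult_ac)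
    qed
    ultimately show "R b = \<alpha> * \<nu> b + (1-\<alpha>) * (\<Sum>c\<in>M. R c * Q c b)"
      by (metis (no_types, lifting) diff_eq_eq add.commute)
  qed
  have "(\<Sum>b\<in>M. R b) = (\<Sum>b\<in>M. \<alpha> * \<nu> b + (1-\<alpha>) * (\<Sum>c\<in>M. R c * Q c b))"
    using eq by simp
  also have "\<dots> = \<alpha> + (1-\<alpha>) * (\<Sum>b\<in>M. \<Sum>c\<in>M. R c * Q c b)"
    by (simp add: sum.distrib sum_distrib_left[symmetric] \<nu>sum)
  also have "(\<Sum>b\<in>M. \<Sum>c\<in>M. R c * Q c b) = (\<Sum>c\<in>M. R c * (\<Sum>b\<in>M. Q c b))"
    by (subst sum.swap) (simp add: sum_distrib_left)
  also have "\<dots> = (\<Sum>c\<in>M. R c)" using Qrow by simp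
  finally have "\<alpha> * (\<Sum>b\<in>M. R b) = \<alpha>" by (simp add: algebra_simps)
  then show "(\<Sum>b\<in>M. R b) = 1" using al by simp
qed

lemma ev01: "eventually (\<lambda>\<alpha>::real. 0 < \<alpha> \<and> \<alpha> < 1) (at_right 0)"
  by (auto simp: eventually_at_right_field intro!: exI[of _ 1])

lemma defect_tendsto:
  assumes fin: "finite M" and Qnn: "\<forall>a\<in>M. \<forall>b\<in>M. Q a b \<ge> 0"
    and Qrow: "\<forall>a\<in>M. (\<Sum>b\<in>M. Q a b) = 1"
    and \<nu>nn: "\<forall>a\<in>M. \<nu> a \<ge> 0" and \<nu>sum: "(\<Sum>a\<in>M. \<nu> a) = 1"
    and b: "b \<in> M"
  defines "R \<equiv> \<lambda>\<alpha>::real. \<lambda>b. \<Sum>t. \<alpha> * (1-\<alpha>)^t * vecmatpow M \<nu> Q t b"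
  shows "((\<lambda>\<alpha>. R \<alpha> b - (\<Sum>c\<in>M. R \<alpha> c * Q c b)) \<longlongrightarrow> 0) (at_right 0)"
proof (rule Lim_null_comparison)
  show "((\<lambda>\<alpha>::real. 2*\<alpha>) \<longlongrightarrow> 0) (at_right 0)"
    using tendsto_mult[OF tendsto_const[of "2::real"] tendsto_ident_at[of "0::real" "{0<..}"]] by simp
  have Qle: "Q c b \<le> 1" if "c \<in> M" for c
    using member_le_sum[OF b, of "Q c"] Qnn Qrow that fin by auto
  have \<nu>le: "\<nu> b \<le> 1"
    using member_le_sum[OF b, of "\<nu>"] \<nu>nn \<nu>sum fin by auto
  show "\<forall>\<^sub>F \<alpha> in at_right 0. norm (R \<alpha> b - (\<Sum>c\<in>M. R \<alpha> c * Q c b)) \<le> 2 * \<alpha>"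
    using ev01
  proof (rule eventually_mono)
    fix \<alpha> :: real assume al: "0 < \<alpha> \<and> \<alpha> < 1"
    have rs: "\<forall>b\<in>M. R \<alpha> b = \<alpha> * \<nu> b + (1-\<alpha>) * (\<Sum>c\<in>M. R \<alpha> c * Q c b)"
       "\<forall>b\<in>M. R \<alpha> b \<ge> 0" "(\<Sum>b\<in>M. R \<alpha> b) = 1"
      using resolvent[OF fin Qnn Qrow \<nu>nn \<nu>sum, of \<alpha>] al unfolding R_def by auto
    let ?S = "\<Sum>c\<in>M. R \<alpha> c * Q c b"
    have S0: "?S \<ge> 0" using rs(2) Qnn b al by (auto intro!: sum_nonneg)
    have "?S \<le> (\<Sum>c\<in>M. R \<alpha> c)"
      using rs(2) Qle by (auto intro!: sum_mono mult_left_le)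
    then have S1: "?S \<le> 1" using rs(3) al by simp
    have "R \<alpha> b - ?S = \<alpha> * (\<nu> b - ?S)" using rs(1) b al by (simp add: algebra_simps)
    moreover have "\<bar>\<nu> b - ?S\<bar> \<le> 2" using S0 S1 \<nu>le \<nu>nn b by auto
    ultimately show "norm (R \<alpha> b - ?S) \<le> 2 * \<alpha>"
      using al by (simp add: abs_mult mult.commute mult_left_mono)
  qed
qed

lemma rho3:
  fixes Q :: "'a \<Rightarrow> 'a \<Rightarrow> real"
  assumes dist: "i \<noteq> j" "j \<noteq> k" "i \<noteq> k" and M: "M = {i,j,k}"
    and Qnn: "\<forall>a\<in>M. \<forall>b\<in>M. Q a b \<ge> 0"
    and Qrow: "\<forall>a\<in>M. (\<Sum>b\<in>M. Q a b) = 1"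
    and \<nu>nn: "\<forall>a\<in>M. \<nu> a \<ge> 0" and \<nu>sum: "(\<Sum>a\<in>M. \<nu> a) = 1"
    and Qik: "Q i k = 0" and apos: "Q i j > 0" and Dpos: "Q k j + Q k i > 0"
  shows "rho M \<nu> Q j = Q i j * (Q k j + Q k i) /
            (Q i j * (Q k j + Q k i) + Q i j * Q j k + Q j i * (Q k j + Q k i) + Q k i * Q j k)"
    and "rho M \<nu> Q i = (Q j i * (Q k j + Q k i) + Q k i * Q j k) /
            (Q i j * (Q k j + Q k i) + Q i j * Q j k + Q j i * (Q k j + Q k i) + Q k i * Q j k)"
proof -
  define a where "a = Q i j"
  define b where "b = Q j i"
  define c where "c = Q j k"
  define e where "e = Q k i"
  define D where "D = Q k j + Q k i"
  define N where "N = a * D + a * c + b * D + e * c"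
  have fin: "finite M" using M by simp
  have inM: "i \<in> M" "j \<in> M" "k \<in> M" using M by auto
  have nn: "b \<ge> 0" "c \<ge> 0" "e \<ge> 0" using Qnn inM unfolding b_def c_def e_def by auto
  have ap: "a > 0" and Dp: "D > 0" using apos Dpos unfolding a_def D_def by auto
  have "a * D > 0" "a * c \<ge> 0" "b * D \<ge> 0" "e * c \<ge> 0" using ap Dp nn by auto
  then have Npos: "N > 0" unfolding N_def by linarith
  have Qii: "Q i i = 1 - a" using Qrow inM Qik dist M unfolding a_def by auto
  have Qkk: "Q k k = 1 - D" using Qrow inM dist M unfolding D_def by auto
  define R where "R \<equiv> \<lambda>\<alpha>::real. \<lambda>b. \<Sum>t. \<alpha> * (1-\<alpha>)^t * vecmatpow M \<nu> Q t b"
  define w where "w \<equiv> \<lambda>\<alpha> b. R \<alpha> b - (\<Sum>c\<in>M. R \<alpha> c * Q c b)"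
  have wi: "((\<lambda>\<alpha>. w \<alpha> i) \<longlongrightarrow> 0) (at_right 0)" and wk: "((\<lambda>\<alpha>. w \<alpha> k) \<longlongrightarrow> 0) (at_right 0)"
    unfolding w_def R_def using defect_tendsto[OF fin Qnn Qrow \<nu>nn \<nu>sum] inM by auto
  have evs: "\<forall>\<^sub>F \<alpha> in at_right 0. R \<alpha> j = (a*D - D * w \<alpha> i - (a+e) * w \<alpha> k) / N
      \<and> R \<alpha> i = (b*D + e*c + (D+c) * w \<alpha> i + (e-b) * w \<alpha> k) / N"
    using ev01
  proof (rule eventually_mono)
    fix \<alpha> :: real assume al: "0 < \<alpha> \<and> \<alpha> < 1"
    have s1: "(\<Sum>b\<in>M. R \<alpha> b) = 1"
      using resolvent[OF fin Qnn Qrow \<nu>nn \<nu>sum, of \<alpha>] al unfolding R_def by auto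
    let ?xi = "R \<alpha> i" and ?xj = "R \<alpha> j" and ?xk = "R \<alpha> k"
    have e1: "?xi + ?xj + ?xk = 1" using s1 M dist by simp
    have "w \<alpha> i = ?xi - (?xi * Q i i + ?xj * Q j i + ?xk * Q k i)"
      unfolding w_def using M dist by (simp add: algebra_simps)
    then have e2: "w \<alpha> i = ?xi * a - ?xj * b - ?xk * e"
      unfolding Qii b_def e_def by (simp add: algebra_simps)
    have "w \<alpha> k = ?xk - (?xi * Q i k + ?xj * Q j k + ?xk * Q k k)"
      unfolding w_def using M dist by (simp add: algebra_simps)
    then have e3: "w \<alpha> k = ?xk * D - ?xj * c"
      unfolding Qkk Qik c_def by (simp add: algebra_simps)
    have "N * ?xj = a*D - D * w \<alpha> i - (a+e) * w \<alpha> k"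
      unfolding N_def e2 e3 using e1 by algebra
    moreover have "N * ?xi = b*D + e*c + (D+c) * w \<alpha> i + (e-b) * w \<alpha> k"
      unfolding N_def e2 e3 using e1 by algebra
    ultimately show "?xj = (a*D - D * w \<alpha> i - (a+e) * w \<alpha> k) / N
      \<and> ?xi = (b*D + e*c + (D+c) * w \<alpha> i + (e-b) * w \<alpha> k) / N"
      using Npos by (auto simp: field_simps)
  qed
  have tj: "((\<lambda>\<alpha>. R \<alpha> j) \<longlongrightarrow> a*D/N) (at_right 0)"
  proof -
    have "((\<lambda>\<alpha>. (a*D - D * w \<alpha> i - (a+e) * w \<alpha> k) / N) \<longlongrightarrow> (a*D - D * 0 - (a+e) * 0) / N) (at_right 0)"
      by (intro tendsto_intros wi wk) (use Npos in auto)
    then show ?thesis by (subst tendsto_cong[OF eventually_mono[OF evs]]) auto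
  qed
  have ti: "((\<lambda>\<alpha>. R \<alpha> i) \<longlongrightarrow> (b*D + e*c)/N) (at_right 0)"
  proof -
    have "((\<lambda>\<alpha>. (b*D + e*c + (D+c) * w \<alpha> i + (e-b) * w \<alpha> k) / N) \<longlongrightarrow> (b*D + e*c + (D+c) * 0 + (e-b) * 0) / N) (at_right 0)"
      by (intro tendsto_intros wi wk) (use Npos in auto)
    then show ?thesis by (subst tendsto_cong[OF eventually_mono[OF evs]]) auto
  qed
  show "rho M \<nu> Q j = Q i j * (Q k j + Q k i) /
            (Q i j * (Q k j + Q k i) + Q i j * Q j k + Q j i * (Q k j + Q k i) + Q k i * Q j k)"
    using tendsto_Lim[OF trivial_limit_at_right_real tj]
    unfolding rho_def R_def a_def D_def N_def b_def c_def e_def by simp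
  show "rho M \<nu> Q i = (Q j i * (Q k j + Q k i) + Q k i * Q j k) /
            (Q i j * (Q k j + Q k i) + Q i j * Q j k + Q j i * (Q k j + Q k i) + Q k i * Q j k)"
    using tendsto_Lim[OF trivial_limit_at_right_real ti]
    unfolding rho_def R_def a_def D_def N_def b_def c_def e_def by simp
qed

lemma final_alg:
  fixes a b c d e a' b' :: real
  assumes pos: "a>0" "b>0" "c>0" "d>0" "e>0" "a'>0" "b'>0" and r: "a'*b = b'*a"
  shows "(b*(d+e)+e*c)/(a*(d+e)+a*c+b*(d+e)+e*c) / (a*(d+e)/(a*(d+e)+a*c+b*(d+e)+e*c))
          > (b'/(a'+b'))/(a'/(a'+b'))"
    and "((b*(d+e)+e*c)/(a*(d+e)+a*c+b*(d+e)+e*c) > b'/(a'+b')) \<longleftrightarrow> e > b"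
proof -
  define D where "D = d+e"
  define N where "N = a*D+a*c+b*D+e*c"
  have Dp: "D>0" using pos unfolding D_def by simp
  have Np: "N>0" using pos Dp unfolding N_def by (simp add: add_pos_pos)
  have b': "b' = a'*b/a" using r pos by (simp add: field_simps)
  have l1: "(b*D+e*c)/N / (a*D/N) = (b*D+e*c)/(a*D)" using Np Dp pos by simp
  have ne: "a'+b' \<noteq> 0" using pos by simp
  have "(b'/(a'+b'))/(a'/(a'+b')) = b'/a'" using ne pos by (simp add: divide_simps)
  also have "b'/a' = b/a" using pos r by (simp add: field_simps)
  finally have l2: "(b'/(a'+b'))/(a'/(a'+b')) = b/a" .
  have ne2: "a+b \<noteq> 0" using pos by simp
  have l3: "b'/(a'+b') = b/(a+b)" using ne ne2 r by (simp add: divide_simps algebra_simps)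
  have lt: "b/a < (b*D+e*c)/(a*D)" using pos Dp by (simp add: field_simps)
  have X: "(b*D+e*c)/N/(a*D/N) > (b'/(a'+b'))/(a'/(a'+b'))" unfolding l1 l2 by (rule lt)
  then show "(b*(d+e)+e*c)/(a*(d+e)+a*c+b*(d+e)+e*c) / (a*(d+e)/(a*(d+e)+a*c+b*(d+e)+e*c))
          > (b'/(a'+b'))/(a'/(a'+b'))" unfolding D_def N_def .
  have "((b*D+e*c)/N > b/(a+b)) \<longleftrightarrow> (b*D+e*c)*(a+b) > b*N"
    using Np pos by (simp add: field_simps)
  also have "\<dots> \<longleftrightarrow> a*c*e > a*c*b" unfolding N_def by (simp add: algebra_simps)
  also have "\<dots> \<longleftrightarrow> e > b" using pos by simp
  finally have Y: "((b*D+e*c)/N > b'/(a'+b')) \<longleftrightarrow> e > b" using l3 by simp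
  then show "((b*(d+e)+e*c)/(a*(d+e)+a*c+b*(d+e)+e*c) > b'/(a'+b')) \<longleftrightarrow> e > b"
    unfolding D_def N_def .
qed

lemma rho2:
  fixes Q :: "'a \<Rightarrow> 'a \<Rightarrow> real"
  assumes dist: "i \<noteq> j" and M: "M = {i,j}"
    and Qnn: "\<forall>a\<in>M. \<forall>b\<in>M. Q a b \<ge> 0"
    and Qrow: "\<forall>a\<in>M. (\<Sum>b\<in>M. Q a b) = 1"
    and \<nu>nn: "\<forall>a\<in>M. \<nu> a \<ge> 0" and \<nu>sum: "(\<Sum>a\<in>M. \<nu> a) = 1"
    and pos: "Q i j + Q j i > 0"
  shows "rho M \<nu> Q j = Q i j / (Q i j + Q j i)"
    and "rho M \<nu> Q i = Q j i / (Q i j + Q j i)"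
proof -
  define a where "a = Q i j"
  define b where "b = Q j i"
  have fin: "finite M" using M by simp
  have inM: "i \<in> M" "j \<in> M" using M by auto
  have Qii: "Q i i = 1 - a" using Qrow inM dist M unfolding a_def by auto
  have Np: "a + b > 0" using pos unfolding a_def b_def .
  define R where "R \<equiv> \<lambda>\<alpha>::real. \<lambda>b. \<Sum>t. \<alpha> * (1-\<alpha>)^t * vecmatpow M \<nu> Q t b"
  define w where "w \<equiv> \<lambda>\<alpha> b. R \<alpha> b - (\<Sum>c\<in>M. R \<alpha> c * Q c b)"
  have wi: "((\<lambda>\<alpha>. w \<alpha> i) \<longlongrightarrow> 0) (at_right 0)"
    unfolding w_def R_def using defect_tendsto[OF fin Qnn Qrow \<nu>nn \<nu>sum] inM by auto
  have evs: "\<forall>\<^sub>F \<alpha> in at_right 0. R \<alpha> j = (a - w \<alpha> i) / (a + b)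
      \<and> R \<alpha> i = (b + w \<alpha> i) / (a + b)"
    using ev01
  proof (rule eventually_mono)
    fix \<alpha> :: real assume al: "0 < \<alpha> \<and> \<alpha> < 1"
    have s1: "(\<Sum>b\<in>M. R \<alpha> b) = 1"
      using resolvent[OF fin Qnn Qrow \<nu>nn \<nu>sum, of \<alpha>] al unfolding R_def by auto
    let ?xi = "R \<alpha> i" and ?xj = "R \<alpha> j"
    have e1: "?xi + ?xj = 1" using s1 M dist by simp
    have "w \<alpha> i = ?xi - (?xi * Q i i + ?xj * Q j i)"
      unfolding w_def using M dist by (simp add: algebra_simps)
    then have e2: "w \<alpha> i = ?xi * a - ?xj * b"
      unfolding Qii b_def by (simp add: algebra_simps)
    have "(a+b) * ?xj = a - w \<alpha> i" unfolding e2 using e1 by algebra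
    moreover have "(a+b) * ?xi = b + w \<alpha> i" unfolding e2 using e1 by algebra
    ultimately show "?xj = (a - w \<alpha> i) / (a + b) \<and> ?xi = (b + w \<alpha> i) / (a + b)"
      using Np by (auto simp: field_simps)
  qed
  have tj: "((\<lambda>\<alpha>. R \<alpha> j) \<longlongrightarrow> a/(a+b)) (at_right 0)"
  proof -
    have "((\<lambda>\<alpha>. (a - w \<alpha> i) / (a + b)) \<longlongrightarrow> (a - 0) / (a + b)) (at_right 0)"
      by (intro tendsto_intros wi) (use Np in auto)
    then show ?thesis by (subst tendsto_cong[OF eventually_mono[OF evs]]) auto
  qed
  have ti: "((\<lambda>\<alpha>. R \<alpha> i) \<longlongrightarrow> b/(a+b)) (at_right 0)"
  proof -
    have "((\<lambda>\<alpha>. (b + w \<alpha> i) / (a + b)) \<longlongrightarrow> (b + 0) / (a + b)) (at_right 0)"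
      by (intro tendsto_intros wi) (use Np in auto)
    then show ?thesis by (subst tendsto_cong[OF eventually_mono[OF evs]]) auto
  qed
  show "rho M \<nu> Q j = Q i j / (Q i j + Q j i)"
    using tendsto_Lim[OF trivial_limit_at_right_real tj]
    unfolding rho_def R_def a_def b_def by simp
  show "rho M \<nu> Q i = Q j i / (Q i j + Q j i)"
    using tendsto_Lim[OF trivial_limit_at_right_real ti]
    unfolding rho_def R_def a_def b_def by simp
qed

lemma msc_stoch:
  assumes "MSC X Q \<nu>" "menu X M" "finite M"
  shows "\<forall>a\<in>M. \<forall>b\<in>M. Q M a b \<ge> 0" "\<forall>a\<in>M. (\<Sum>b\<in>M. Q M a b) = 1"
    "\<forall>a\<in>M. \<nu> M a \<ge> 0" "(\<Sum>a\<in>M. \<nu> M a) = 1"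
proof -
  have h: "(\<forall>a\<in>M. \<forall>b\<in>M. Q M a b \<ge> 0) \<and>
      (\<forall>a\<in>M. \<nu> M a \<ge> 0) \<and> (\<Sum>a\<in>M. \<nu> M a) = 1 \<and>
      (\<forall>a\<in>M. Q M a a = 1 - (\<Sum>c\<in>M - {a}. Q M a c) \<and> Q M a a > 0)"
    using assms(1)[unfolded MSC_def, rule_format, OF assms(2)] by (elim conjE) (intro conjI)
  then show "\<forall>a\<in>M. \<forall>b\<in>M. Q M a b \<ge> 0" "\<forall>a\<in>M. \<nu> M a \<ge> 0" "(\<Sum>a\<in>M. \<nu> M a) = 1" by auto
  show "\<forall>a\<in>M. (\<Sum>b\<in>M. Q M a b) = 1"
  proof
    fix a assume a: "a \<in> M"
    have "(\<Sum>b\<in>M. Q M a b) = Q M a a + (\<Sum>c\<in>M - {a}. Q M a c)"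
      using sum.remove[OF assms(3) a] by simp
    then show "(\<Sum>b\<in>M. Q M a b) = 1" using h a by simp
  qed
qed


theorem mainTheorem13:
  fixes i j k :: 'a
    and Q :: "'a set \<Rightarrow> 'a \<Rightarrow> 'a \<Rightarrow> real"
    and \<nu> :: "'a set \<Rightarrow> 'a \<Rightarrow> real"
  defines "X \<equiv> {i, j, k}"
  assumes distinct: "i \<noteq> j" "j \<noteq> k" "i \<noteq> k"
    and msc: "MSC X Q \<nu>"
    and pos: "\<And>M a b. menu X M \<Longrightarrow> a \<in> M \<Longrightarrow> b \<in> M \<Longrightarrow> a \<noteq> b \<Longrightarrow>
               \<not> (a = i \<and> b = k \<and> (M = {i, k} \<or> M = X)) \<Longrightarrow> Q M a b > 0"
    and zero1: "Q {i, k} i k = 0"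
    and zero2: "Q X i k = 0"
  shows "rho X (\<nu> X) (Q X) i / rho X (\<nu> X) (Q X) j
           > rho {i, j} (\<nu> {i, j}) (Q {i, j}) i / rho {i, j} (\<nu> {i, j}) (Q {i, j}) j
       \<and> (rho X (\<nu> X) (Q X) i > rho {i, j} (\<nu> {i, j}) (Q {i, j}) i
           \<longleftrightarrow> Q X k i > Q X j i)"
proof -
  have mX: "menu X X" and m2: "menu X {i,j}" unfolding menu_def X_def by auto
  have fX: "finite X" unfolding X_def by simp
  note sX = msc_stoch[OF msc mX fX]
  note s2 = msc_stoch[OF msc m2]
  have inX: "i \<in> X" "j \<in> X" "k \<in> X" unfolding X_def by auto
  have p1: "Q X i j > 0" using pos[OF mX inX(1,2) distinct(1)] distinct by auto
  have p2: "Q X j i > 0" using pos[OF mX inX(2,1)] distinct by auto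
  have p3: "Q X j k > 0" using pos[OF mX inX(2,3)] distinct by auto
  have p4: "Q X k j > 0" using pos[OF mX inX(3,2)] distinct by auto
  have p5: "Q X k i > 0" using pos[OF mX inX(3,1)] distinct by auto
  have p6: "Q {i,j} i j > 0" using pos[OF m2, of i j] distinct by auto
  have p7: "Q {i,j} j i > 0" using pos[OF m2, of j i] distinct by auto
  have H: "\<forall>a\<in>X. \<forall>b\<in>X. a \<noteq> b \<longrightarrow>
          (Q {a,b} a b = 0 \<longrightarrow> Q {a,b} b a > 0) \<and>
          Q {a,b} a b * Q X b a = Q {a,b} b a * Q X a b"
    using msc[unfolded MSC_def, rule_format, OF mX] by (elim conjE)
  have r: "Q {i,j} i j * Q X j i = Q {i,j} j i * Q X i j"
    using H[rule_format, OF inX(1) inX(2) distinct(1)] by blast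
  have R3: "rho X (\<nu> X) (Q X) j = Q X i j * (Q X k j + Q X k i) /
            (Q X i j * (Q X k j + Q X k i) + Q X i j * Q X j k + Q X j i * (Q X k j + Q X k i) + Q X k i * Q X j k)"
     "rho X (\<nu> X) (Q X) i = (Q X j i * (Q X k j + Q X k i) + Q X k i * Q X j k) /
            (Q X i j * (Q X k j + Q X k i) + Q X i j * Q X j k + Q X j i * (Q X k j + Q X k i) + Q X k i * Q X j k)"
    using rho3[OF distinct X_def[THEN meta_eq_to_obj_eq] sX zero2 p1] p4 p5 by auto
  have R2: "rho {i,j} (\<nu> {i,j}) (Q {i,j}) j = Q {i,j} i j / (Q {i,j} i j + Q {i,j} j i)"
     "rho {i,j} (\<nu> {i,j}) (Q {i,j}) i = Q {i,j} j i / (Q {i,j} i j + Q {i,j} j i)"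
    using rho2[OF distinct(1) refl s2] p6 p7 by auto
  note fa = final_alg[OF p1 p2 p3 p4 p5 p6 p7 r]
  show ?thesis unfolding R3 R2 by (rule conjI[OF fa(1) fa(2)])
qed

end
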